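(* Let $R$ be a local ring with maximal ideal $\mathfrak{m}$, complete and separated with respect to the $\mathfrak{m}$-adic topology, $\sigma$ a ring endomorphism of $R$ with $\sigma(\mathfrak{m})\subseteq\mathfrak{m}$, and $\delta$ a $\sigma$-derivation with $\delta(R)\subseteq\mathfrak{m}$ and $\delta(\mathfrak{m})\subseteq\mathfrak{m}^2$. Let $A=R[[X;\sigma,\delta]]$. An element $f=\sum f_iX^i\in A$ is a unit in $A$ if and only if its constant term $f_0$ is a unit in $R$. In particular $A$ is a local ring.
   Context: A $\sigma$-derivation is an additive map with $\delta(rs)=\delta(r)s+\sigma(r)\delta(s)$. $R[[X;\sigma,\delta]]$ consists of formal series $\sum_{n\ge0}r_nX^n$ with multiplication determined by $Xr=\sigma(r)X+\delta(r)$. A local ring is one whose non-units form a proper two-sided ideal. *)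

theory Defs
  imports Main
begin

definition unit_wrt :: "('b \<Rightarrow> 'b \<Rightarrow> 'b) \<Rightarrow> 'b \<Rightarrow> 'b \<Rightarrow> bool" where
  "unit_wrt mul one x \<longleftrightarrow> (\<exists>y. mul x y = one \<and> mul y x = one)"

definition two_sided_ideal_wrt ::
  "('b \<Rightarrow> 'b \<Rightarrow> 'b) \<Rightarrow> ('b \<Rightarrow> 'b) \<Rightarrow> 'b \<Rightarrow> ('b \<Rightarrow> 'b \<Rightarrow> 'b) \<Rightarrow> 'b set \<Rightarrow> bool" where
  "two_sided_ideal_wrt add neg zero mul I \<longleftrightarrow>
     zero \<in> I \<and> (\<forall>x\<in>I. \<forall>y\<in>I. add x y \<in> I) \<and> (\<forall>x\<in>I. neg x \<in> I) \<and>
     (\<forall>x\<in>I. \<forall>r. mul r x \<in> I \<and> mul x r \<in> I)"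

definition local_ring_wrt ::
  "('b \<Rightarrow> 'b \<Rightarrow> 'b) \<Rightarrow> ('b \<Rightarrow> 'b) \<Rightarrow> 'b \<Rightarrow> ('b \<Rightarrow> 'b \<Rightarrow> 'b) \<Rightarrow> 'b \<Rightarrow> bool" where
  "local_ring_wrt add neg zero mul one \<longleftrightarrow>
     two_sided_ideal_wrt add neg zero mul {x. \<not> unit_wrt mul one x} \<and>
     {x. \<not> unit_wrt mul one x} \<noteq> UNIV"

definition nonunits :: "'a::ring_1 set" where
  "nonunits = {x. \<not> unit_wrt (*) 1 x}"

inductive_set ideal_prod :: "'a::ring_1 set \<Rightarrow> 'a set \<Rightarrow> 'a set" for M N where
  zero: "0 \<in> ideal_prod M N"
| prod: "x \<in> M \<Longrightarrow> y \<in> N \<Longrightarrow> x * y \<in> ideal_prod M N"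
| diff: "a \<in> ideal_prod M N \<Longrightarrow> b \<in> ideal_prod M N \<Longrightarrow> a - b \<in> ideal_prod M N"

fun ideal_pow :: "'a::ring_1 set \<Rightarrow> nat \<Rightarrow> 'a set" where
  "ideal_pow M 0 = UNIV"
| "ideal_pow M (Suc n) = ideal_prod M (ideal_pow M n)"

definition adic_tendsto :: "'a::ring_1 set \<Rightarrow> (nat \<Rightarrow> 'a) \<Rightarrow> 'a \<Rightarrow> bool" where
  "adic_tendsto M S a \<longleftrightarrow> (\<forall>k. \<exists>N. \<forall>n\<ge>N. S n - a \<in> ideal_pow M k)"

definition adic_cauchy :: "'a::ring_1 set \<Rightarrow> (nat \<Rightarrow> 'a) \<Rightarrow> bool" where
  "adic_cauchy M S \<longleftrightarrow> (\<forall>k. \<exists>N. \<forall>n\<ge>N. \<forall>p\<ge>N. S n - S p \<in> ideal_pow M k)"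

definition adic_separated :: "'a::ring_1 set \<Rightarrow> bool" where
  "adic_separated M \<longleftrightarrow> (\<Inter>k. ideal_pow M k) = {0}"

definition adic_complete :: "'a::ring_1 set \<Rightarrow> bool" where
  "adic_complete M \<longleftrightarrow> (\<forall>S. adic_cauchy M S \<longrightarrow> (\<exists>a. adic_tendsto M S a))"

definition adic_lim :: "'a::ring_1 set \<Rightarrow> (nat \<Rightarrow> 'a) \<Rightarrow> 'a" where
  "adic_lim M S = (THE a. adic_tendsto M S a)"

definition ring_endo :: "('a::ring_1 \<Rightarrow> 'a) \<Rightarrow> bool" where
  "ring_endo \<sigma> \<longleftrightarrow> (\<forall>a b. \<sigma> (a + b) = \<sigma> a + \<sigma> b) \<and> (\<forall>a b. \<sigma> (a * b) = \<sigma> a * \<sigma> b) \<and> \<sigma> 1 = 1"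

definition sigma_derivation :: "('a::ring_1 \<Rightarrow> 'a) \<Rightarrow> ('a \<Rightarrow> 'a) \<Rightarrow> bool" where
  "sigma_derivation \<sigma> \<delta> \<longleftrightarrow> (\<forall>a b. \<delta> (a + b) = \<delta> a + \<delta> b) \<and>
     (\<forall>r s. \<delta> (r * s) = \<delta> r * s + \<sigma> r * \<delta> s)"

(* X^n r = sum_j skew_coeff sigma delta n j r * X^j, from X r = sigma(r) X + delta(r) *)
fun skew_coeff :: "('a::ring_1 \<Rightarrow> 'a) \<Rightarrow> ('a \<Rightarrow> 'a) \<Rightarrow> nat \<Rightarrow> nat \<Rightarrow> 'a \<Rightarrow> 'a" where
  "skew_coeff \<sigma> \<delta> 0 j r = (if j = 0 then r else 0)"
| "skew_coeff \<sigma> \<delta> (Suc n) j r =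
     (if j = 0 then 0 else \<sigma> (skew_coeff \<sigma> \<delta> n (j - 1) r)) + \<delta> (skew_coeff \<sigma> \<delta> n j r)"

(* Multiplication in R[[X;sigma,delta]] (series = coefficient functions nat => R):
   (sum_i f_i X^i)(sum_j g_j X^j) = sum_{i,j,l} f_i * skew_coeff i l (g_j) X^(l+j);
   the coefficient of X^k is the M-adic limit of its partial sums over i. *)
definition skew_mult :: "('a::ring_1 \<Rightarrow> 'a) \<Rightarrow> ('a \<Rightarrow> 'a) \<Rightarrow> 'a set \<Rightarrow>
    (nat \<Rightarrow> 'a) \<Rightarrow> (nat \<Rightarrow> 'a) \<Rightarrow> nat \<Rightarrow> 'a" where
  "skew_mult \<sigma> \<delta> M f g k =
     adic_lim M (\<lambda>N. \<Sum>j\<le>k. \<Sum>i<N. f i * skew_coeff \<sigma> \<delta> i (k - j) (g j))"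

definition skew_one :: "nat \<Rightarrow> 'a::ring_1" where
  "skew_one k = (if k = 0 then 1 else 0)"

definition skew_add :: "(nat \<Rightarrow> 'a::ring_1) \<Rightarrow> (nat \<Rightarrow> 'a) \<Rightarrow> nat \<Rightarrow> 'a" where
  "skew_add f g k = f k + g k"

definition skew_neg :: "(nat \<Rightarrow> 'a::ring_1) \<Rightarrow> nat \<Rightarrow> 'a" where
  "skew_neg f k = - f k"

end

theory Submission
  imports Defs
begin


locale skewctx =
  fixes \<sigma> \<delta> :: "'a::ring_1 \<Rightarrow> 'a"
  assumes loc: "local_ring_wrt (+) uminus 0 (*) (1::'a)"
    and compl: "adic_complete (nonunits :: 'a set)"
    and sep: "adic_separated (nonunits :: 'a set)"
    and endo: "ring_endo \<sigma>"
    and sigm: "\<sigma> ` nonunits \<subseteq> nonunits"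
    and der: "sigma_derivation \<sigma> \<delta>"
    and delR: "range \<delta> \<subseteq> nonunits"
    and delm: "\<delta> ` nonunits \<subseteq> ideal_pow nonunits 2"
begin

abbreviation M :: "'a set" where "M \<equiv> nonunits"
abbreviation P :: "nat \<Rightarrow> 'a set" where "P n \<equiv> ideal_pow (nonunits::'a set) n"

lemma M_ideal: "two_sided_ideal_wrt (+) uminus 0 (*) M"
  using loc unfolding local_ring_wrt_def nonunits_def by simp

lemma M_zero: "0 \<in> M" using M_ideal unfolding two_sided_ideal_wrt_def by blast
lemma M_add: "x \<in> M \<Longrightarrow> y \<in> M \<Longrightarrow> x + y \<in> M" using M_ideal unfolding two_sided_ideal_wrt_def by blast
lemma M_neg: "x \<in> M \<Longrightarrow> - x \<in> M" using M_ideal unfolding two_sided_ideal_wrt_def by blast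
lemma M_diff: "x \<in> M \<Longrightarrow> y \<in> M \<Longrightarrow> x - y \<in> M" using M_add[of x "-y"] M_neg[of y] by simp
lemma M_left: "x \<in> M \<Longrightarrow> r * x \<in> M" using M_ideal unfolding two_sided_ideal_wrt_def by blast
lemma M_right: "x \<in> M \<Longrightarrow> x * r \<in> M" using M_ideal unfolding two_sided_ideal_wrt_def by blast
lemma one_notin_M: "(1::'a) \<notin> M"
proof
  assume "(1::'a) \<in> M"
  then have "\<forall>x::'a. x \<in> M" using M_left[of 1] by (metis mult.right_neutral)
  then show False using loc unfolding local_ring_wrt_def nonunits_def by auto
qed
lemma notM_unit: "x \<notin> M \<longleftrightarrow> unit_wrt (*) 1 x" unfolding nonunits_def by simp

lemma P_zero: "0 \<in> P n"
  by (cases n) (auto intro: ideal_prod.zero)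

lemma P_diff: "x \<in> P n \<Longrightarrow> y \<in> P n \<Longrightarrow> x - y \<in> P n"
  by (cases n) (auto intro: ideal_prod.diff)

lemma P_neg: "x \<in> P n \<Longrightarrow> - x \<in> P n"
  using P_diff[OF P_zero, of x n] by simp

lemma P_add: "x \<in> P n \<Longrightarrow> y \<in> P n \<Longrightarrow> x + y \<in> P n"
  using P_diff[of x n "-y"] P_neg[of y n] by simp

lemma P_left: "x \<in> P n \<Longrightarrow> r * x \<in> P n"
proof (induction n arbitrary: x)
  case 0 then show ?case by simp
next
  case (Suc n)
  from Suc.prems have "x \<in> ideal_prod M (P n)" by simp
  then have "r * x \<in> ideal_prod M (P n)"
  proof (induction rule: ideal_prod.induct)
    case zero then show ?case by (simp add: ideal_prod.zero)
  next
    case (prod x y) then show ?case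
      using ideal_prod.prod[OF M_left[OF prod(1), of r] prod(2)] by (simp add: mult.assoc)
  next
    case (diff a b) then show ?case using ideal_prod.diff by (metis right_diff_distrib)
  qed
  then show ?case by simp
qed

lemma P_mult: "x \<in> P a \<Longrightarrow> y \<in> P b \<Longrightarrow> x * y \<in> P (a + b)"
proof (induction a arbitrary: x)
  case 0 then show ?case using P_left by simp
next
  case (Suc a)
  from Suc.prems(1) have "x \<in> ideal_prod M (P a)" by simp
  then have "x * y \<in> ideal_prod M (P (a + b))"
  proof (induction rule: ideal_prod.induct)
    case zero then show ?case by (simp add: ideal_prod.zero)
  next
    case (prod u v) then show ?case
      using ideal_prod.prod[OF prod(1) Suc.IH[OF prod(2) Suc.prems(2)]] by (simp add: mult.assoc)
  next
    case (diff a b) then show ?case using ideal_prod.diff by (metis left_diff_distrib)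
  qed
  then show ?case by simp
qed

lemma P_right: "x \<in> P n \<Longrightarrow> x * r \<in> P n"
  using P_mult[of x n r 0] by simp

lemma P_Suc_sub: "P (Suc n) \<subseteq> P n"
proof (induction n)
  case 0 then show ?case by simp
next
  case (Suc n)
  show ?case
  proof
    fix x assume "x \<in> P (Suc (Suc n))"
    then have "x \<in> ideal_prod M (P (Suc n))" by simp
    then have "x \<in> ideal_prod M (P n)"
      by (induction rule: ideal_prod.induct) (use Suc.IH in \<open>auto intro: ideal_prod.intros\<close>)
    then show "x \<in> P (Suc n)" by simp
  qed
qed

lemma P_mono: "a \<le> b \<Longrightarrow> P b \<subseteq> P a"
  by (rule lift_Suc_antimono_le[of P]) (use P_Suc_sub in auto)

lemma P_monoD: "x \<in> P b \<Longrightarrow> a \<le> b \<Longrightarrow> x \<in> P a"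
  using P_mono by blast

lemma P_one: "P 1 = M"
proof
  show "P 1 \<subseteq> M"
  proof
    fix x assume "x \<in> P 1"
    then have "x \<in> ideal_prod M UNIV" by simp
    then show "x \<in> M" by (induction rule: ideal_prod.induct) (auto intro: M_zero M_right M_diff)
  qed
  show "M \<subseteq> P 1"
  proof
    fix x assume "x \<in> M"
    then have "x * 1 \<in> ideal_prod M UNIV" by (intro ideal_prod.prod) auto
    then show "x \<in> P 1" by simp
  qed
qed

lemma P_sum: "finite F \<Longrightarrow> (\<And>i. i \<in> F \<Longrightarrow> a i \<in> P n) \<Longrightarrow> sum a F \<in> P n"
  by (induction F rule: finite_induct) (auto intro: P_zero P_add)

lemma P_sep: "(\<And>k. x \<in> P k) \<Longrightarrow> x = 0"
  using sep unfolding adic_separated_def by auto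

end


context skewctx
begin

lemma s_add: "\<sigma> (x + y) = \<sigma> x + \<sigma> y" using endo unfolding ring_endo_def by blast
lemma s_mult: "\<sigma> (x * y) = \<sigma> x * \<sigma> y" using endo unfolding ring_endo_def by blast
lemma s_one: "\<sigma> 1 = 1" using endo unfolding ring_endo_def by blast
lemma s_zero: "\<sigma> 0 = 0" using s_add[of 0 0] by simp
lemma s_neg: "\<sigma> (- x) = - \<sigma> x" using s_add[of x "-x"] s_zero minus_unique[of "\<sigma> x" "\<sigma> (-x)"] by simp
lemma s_diff: "\<sigma> (x - y) = \<sigma> x - \<sigma> y" using s_add[of x "-y"] s_neg[of y] by simp
lemma s_sum: "\<sigma> (sum f A) = (\<Sum>i\<in>A. \<sigma> (f i))"
  by (induction A rule: infinite_finite_induct) (auto simp: s_zero s_add)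

lemma d_add: "\<delta> (x + y) = \<delta> x + \<delta> y" using der unfolding sigma_derivation_def by blast
lemma d_mult: "\<delta> (x * y) = \<delta> x * y + \<sigma> x * \<delta> y" using der unfolding sigma_derivation_def by blast
lemma d_zero: "\<delta> 0 = 0" using d_add[of 0 0] by simp
lemma d_neg: "\<delta> (- x) = - \<delta> x" using d_add[of x "-x"] d_zero minus_unique[of "\<delta> x" "\<delta> (-x)"] by simp
lemma d_diff: "\<delta> (x - y) = \<delta> x - \<delta> y" using d_add[of x "-y"] d_neg[of y] by simp
lemma d_sum: "\<delta> (sum f A) = (\<Sum>i\<in>A. \<delta> (f i))"
  by (induction A rule: infinite_finite_induct) (auto simp: d_zero d_add)
lemma d_one: "\<delta> 1 = 0" using d_mult[of 1 1] s_one by simp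

lemma s_P: "x \<in> P n \<Longrightarrow> \<sigma> x \<in> P n"
proof (induction n arbitrary: x)
  case 0 then show ?case by simp
next
  case (Suc n)
  from Suc.prems have "x \<in> ideal_prod M (P n)" by simp
  then have "\<sigma> x \<in> ideal_prod M (P n)"
  proof (induction rule: ideal_prod.induct)
    case zero then show ?case by (simp add: ideal_prod.zero s_zero)
  next
    case (prod u v) then show ?case
      using ideal_prod.prod[of "\<sigma> u" M "\<sigma> v" "P n"] sigm Suc.IH by (auto simp: s_mult)
  next
    case (diff a b) then show ?case using ideal_prod.diff by (metis s_diff)
  qed
  then show ?case by simp
qed

lemma d_P: "x \<in> P n \<Longrightarrow> \<delta> x \<in> P (Suc n)"
proof (induction n arbitrary: x)
  case 0 then show ?case using delR P_one by auto
next
  case (Suc n)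
  from Suc.prems have "x \<in> ideal_prod M (P n)" by simp
  then have "\<delta> x \<in> ideal_prod M (P (Suc n))"
  proof (induction rule: ideal_prod.induct)
    case zero then show ?case by (simp add: ideal_prod.zero d_zero)
  next
    case (prod u v)
    have 1: "\<delta> u * v \<in> P (2 + n)" using P_mult[of "\<delta> u" 2 v n] delm prod by auto
    have 2: "\<sigma> u * \<delta> v \<in> ideal_prod M (P (Suc n))"
      using ideal_prod.prod[of "\<sigma> u" M "\<delta> v" "P (Suc n)"] sigm Suc.IH prod by auto
    have "\<delta> u * v + \<sigma> u * \<delta> v \<in> P (Suc (Suc n))"
      using P_add[of "\<delta> u * v" "Suc (Suc n)" "\<sigma> u * \<delta> v"] 1 2 by (simp add: numeral_2_eq_2)
    then show ?case by (simp add: d_mult)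
  next
    case (diff a b) then show ?case using ideal_prod.diff by (metis d_diff)
  qed
  then show ?case by simp
qed

abbreviation K where "K \<equiv> skew_coeff \<sigma> \<delta>"

lemma K_zero: "K i l 0 = 0"
  by (induction i arbitrary: l) (auto simp: s_zero d_zero)

lemma K_add: "K i l (x + y) = K i l x + K i l y"
  by (induction i arbitrary: l) (auto simp: s_add d_add algebra_simps)

lemma K_neg: "K i l (- x) = - K i l x"
  using K_add[of i l x "-x"] K_zero minus_unique[of "K i l x" "K i l (-x)"] by simp

lemma K_diff: "K i l (x - y) = K i l x - K i l y"
  using K_add[of i l x "-y"] K_neg[of i l y] by simp

lemma K_sum: "K i l (sum f A) = (\<Sum>j\<in>A. K i l (f j))"
  by (induction A rule: infinite_finite_induct) (auto simp: K_zero K_add)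

lemma K_gt: "i < l \<Longrightarrow> K i l x = 0"
  by (induction i arbitrary: l) (auto simp: s_zero d_zero)

lemma K_0: "K 0 l x = (if l = 0 then x else 0)" by simp

lemma K_one: "K i l 1 = (if l = i then 1 else 0)"
  by (induction i arbitrary: l) (auto simp: s_zero d_zero s_one d_one)

lemma K_P: "x \<in> P n \<Longrightarrow> K i l x \<in> P (n + i - l)"
proof (induction i arbitrary: l)
  case 0 then show ?case by (auto simp: P_zero)
next
  case (Suc i)
  have A: "(if l = 0 then 0 else \<sigma> (K i (l - 1) x)) \<in> P (n + Suc i - l)"
  proof (cases "l = 0")
    case True then show ?thesis by (simp add: ideal_prod.zero)
  next
    case False
    have "n + i - (l - 1) = n + Suc i - l" using False by arith
    then show ?thesis using False s_P[OF Suc.IH[OF Suc.prems, of "l - 1"]] by simp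
  qed
  have B: "\<delta> (K i l x) \<in> P (n + Suc i - l)"
    using d_P[OF Suc.IH[OF Suc.prems, of l]] by (rule P_monoD) arith
  show ?case using P_add[OF A B] by simp
qed

lemma K_P': "x \<in> P n \<Longrightarrow> K i l x \<in> P n"
proof (cases "l \<le> i")
  case True
  assume x: "x \<in> P n"
  show ?thesis using K_P[OF x, of i l] by (rule P_monoD) (use True in arith)
next
  case False then show ?thesis by (simp add: K_gt P_zero)
qed

end


context skewctx
begin

lemma K_mult: "K i l (a * b) = (\<Sum>t\<le>i. K i t a * K t l b)"
proof (induction i arbitrary: l)
  case 0 then show ?case by simp
next
  case (Suc i)
  have L: "K (Suc i) l (a * b) =
     (if l = 0 then 0 else (\<Sum>t\<le>i. \<sigma> (K i t a) * \<sigma> (K t (l - 1) b))) +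
     ((\<Sum>t\<le>i. \<delta> (K i t a) * K t l b) + (\<Sum>t\<le>i. \<sigma> (K i t a) * \<delta> (K t l b)))"
    by (simp add: Suc.IH s_sum d_sum s_mult d_mult sum.distrib)
  have X: "(\<Sum>t\<le>Suc i. (if t = 0 then 0 else \<sigma> (K i (t - 1) a)) * K t l b)
      = (\<Sum>t\<le>i. \<sigma> (K i t a) * K (Suc t) l b)"
    by (subst sum.atMost_Suc_shift) simp
  have Y: "(\<Sum>t\<le>Suc i. \<delta> (K i t a) * K t l b) = (\<Sum>t\<le>i. \<delta> (K i t a) * K t l b)"
    by (simp add: K_gt d_zero)
  have "(\<Sum>t\<le>Suc i. K (Suc i) t a * K t l b)
      = (\<Sum>t\<le>Suc i. (if t = 0 then 0 else \<sigma> (K i (t - 1) a)) * K t l b)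
        + (\<Sum>t\<le>Suc i. \<delta> (K i t a) * K t l b)"
    by (simp add: distrib_right sum.distrib del: sum.atMost_Suc)
  also have "\<dots> = (\<Sum>t\<le>i. \<sigma> (K i t a) * K (Suc t) l b) + (\<Sum>t\<le>i. \<delta> (K i t a) * K t l b)"
    using X Y by simp
  also have "\<dots> = (if l = 0 then 0 else (\<Sum>t\<le>i. \<sigma> (K i t a) * \<sigma> (K t (l - 1) b))) +
     ((\<Sum>t\<le>i. \<delta> (K i t a) * K t l b) + (\<Sum>t\<le>i. \<sigma> (K i t a) * \<delta> (K t l b)))"
    by (simp add: distrib_left sum.distrib algebra_simps)
  finally show ?case using L by simp
qed

lemma K_comp: "K (a + b) s r = (\<Sum>u\<le>s. K a (s - u) (K b u r))"
proof (induction a arbitrary: s)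
  case 0
  have "(\<Sum>u\<le>s. K 0 (s - u) (K b u r)) = (\<Sum>u\<le>s. if u = s then K b u r else 0)"
    by (rule sum.cong) auto
  then show ?case by simp
next
  case (Suc a)
  have "K (Suc a + b) s r = (if s = 0 then 0 else \<sigma> (K (a + b) (s - 1) r)) + \<delta> (K (a + b) s r)"
    by simp
  also have "\<dots> = (if s = 0 then 0 else (\<Sum>u\<le>s - 1. \<sigma> (K a (s - 1 - u) (K b u r))))
       + (\<Sum>u\<le>s. \<delta> (K a (s - u) (K b u r)))"
    by (simp add: Suc.IH s_sum d_sum)
  also have "(if s = 0 then 0 else (\<Sum>u\<le>s - 1. \<sigma> (K a (s - 1 - u) (K b u r))))
     = (\<Sum>u\<le>s. if s - u = 0 then 0 else \<sigma> (K a (s - u - 1) (K b u r)))"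
  proof (cases s)
    case 0 then show ?thesis by simp
  next
    case (Suc s')
    have "(\<Sum>u\<le>s'. \<sigma> (K a (s' - u) (K b u r))) =
        (\<Sum>u\<le>s'. if Suc s' - u = 0 then 0 else \<sigma> (K a (Suc s' - u - 1) (K b u r)))"
      by (rule sum.cong) (auto simp: Suc_diff_le)
    then show ?thesis using Suc by simp
  qed
  finally show ?case by (simp add: sum.distrib)
qed

end


context skewctx
begin

definition S :: "('i \<Rightarrow> 'a) \<Rightarrow> nat \<Rightarrow> 'i set" where
  "S a k = {i. a i \<notin> P k}"

definition asummable :: "('i \<Rightarrow> 'a) \<Rightarrow> bool" where
  "asummable a \<longleftrightarrow> (\<forall>k. finite (S a k))"

definition asum :: "('i \<Rightarrow> 'a) \<Rightarrow> 'a" where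
  "asum a = (THE s. \<forall>k. s - sum a (S a k) \<in> P k)"

lemma S_mono: "k \<le> n \<Longrightarrow> S a k \<subseteq> S a n"
  unfolding S_def using P_mono by blast

lemma sum_outside: "finite F \<Longrightarrow> F \<inter> S a k = {} \<Longrightarrow> sum a F \<in> P k"
  by (rule P_sum) (auto simp: S_def)

lemma sum_extend: "finite F \<Longrightarrow> S a k \<subseteq> F \<Longrightarrow> sum a F - sum a (S a k) \<in> P k"
proof -
  assume F: "finite F" and sub: "S a k \<subseteq> F"
  have "sum a F = sum a (S a k) + sum a (F - S a k)"
    using F sub by (metis add.commute sum.subset_diff)
  moreover have "sum a (F - S a k) \<in> P k" using F by (intro sum_outside) auto
  ultimately show ?thesis by simp
qed

lemma asum_exists: "asummable a \<Longrightarrow> \<exists>s. \<forall>k. s - sum a (S a k) \<in> P k"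
proof -
  assume sa: "asummable a"
  define x where "x n = sum a (S a n)" for n
  have step: "x n - x k \<in> P k" if "k \<le> n" for n k
    unfolding x_def using sum_extend[of "S a n" a k] S_mono[OF that, of a] sa unfolding asummable_def by blast
  have "adic_cauchy M x"
    unfolding adic_cauchy_def
  proof
    fix k show "\<exists>N. \<forall>n\<ge>N. \<forall>p\<ge>N. x n - x p \<in> P k"
    proof (intro exI allI impI)
      fix n p assume "k \<le> n" "k \<le> p"
      then have "(x n - x k) - (x p - x k) \<in> P k" using step P_diff by blast
      then show "x n - x p \<in> P k" by simp
    qed
  qed
  then obtain s where s: "adic_tendsto M x s" using compl unfolding adic_complete_def by blast
  have "s - x k \<in> P k" for k
  proof -
    obtain N where N: "\<forall>n\<ge>N. x n - s \<in> P k" using s unfolding adic_tendsto_def by blast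
    have a1: "x (max N k) - s \<in> P k" using N by simp
    have a2: "x (max N k) - x k \<in> P k" using step[of k "max N k"] by simp
    have "(x (max N k) - x k) - (x (max N k) - s) \<in> P k" using P_diff[OF a2 a1] .
    then show ?thesis by simp
  qed
  then show ?thesis unfolding x_def by blast
qed

lemma asum_unique: "(\<forall>k. s - sum a (S a k) \<in> P k) \<Longrightarrow> (\<forall>k. t - sum a (S a k) \<in> P k) \<Longrightarrow> s = t"
proof -
  assume s: "\<forall>k. s - sum a (S a k) \<in> P k" and t: "\<forall>k. t - sum a (S a k) \<in> P k"
  have "s - t \<in> P k" for k
    using P_diff[OF s[rule_format, of k] t[rule_format, of k]] by simp
  then show ?thesis using P_sep[of "s - t"] by simp
qed

lemma asum_prop: "asummable a \<Longrightarrow> asum a - sum a (S a k) \<in> P k"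
proof -
  assume "asummable a"
  then obtain s where s: "\<forall>k. s - sum a (S a k) \<in> P k" using asum_exists by blast
  have "asum a = s" unfolding asum_def
    by (rule the_equality) (use s asum_unique in auto)
  then show ?thesis using s by simp
qed

lemma asum_approx: "asummable a \<Longrightarrow> finite F \<Longrightarrow> S a k \<subseteq> F \<Longrightarrow> asum a - sum a F \<in> P k"
proof -
  assume a: "asummable a" and F: "finite F" "S a k \<subseteq> F"
  have "(asum a - sum a (S a k)) - (sum a F - sum a (S a k)) \<in> P k"
    using P_diff[OF asum_prop[OF a] sum_extend[OF F]] .
  then show ?thesis by simp
qed

lemma asum_eqI:
  assumes a: "asummable a" and h: "\<And>k. \<exists>F. finite F \<and> S a k \<subseteq> F \<and> s - sum a F \<in> P k"
  shows "asum a = s"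
proof -
  have "asum a - s \<in> P k" for k
  proof -
    obtain F where F: "finite F" "S a k \<subseteq> F" "s - sum a F \<in> P k" using h by blast
    have "(asum a - sum a F) - (s - sum a F) \<in> P k" using P_diff[OF asum_approx[OF a F(1,2)] F(3)] .
    then show ?thesis by simp
  qed
  then show ?thesis using P_sep[of "asum a - s"] by simp
qed

lemma asum_P: "asummable a \<Longrightarrow> (\<And>i. a i \<in> P w) \<Longrightarrow> asum a \<in> P w"
proof -
  assume a: "asummable a" and h: "\<And>i. a i \<in> P w"
  have "S a w = {}" using h by (auto simp: S_def)
  then show ?thesis using asum_prop[OF a, of w] by simp
qed

lemma asummable_weight:
  assumes "\<And>i. a i \<in> P (w i)" and "\<And>N. finite {i. w i < N}"
  shows "asummable a"
  unfolding asummable_def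
proof
  fix k
  have "S a k \<subseteq> {i. w i < k}"
  proof
    fix i assume "i \<in> S a k"
    then have "a i \<notin> P k" by (simp add: S_def)
    then show "i \<in> {i. w i < k}" using assms(1)[of i] P_mono[of k "w i"] by (cases "k \<le> w i") auto
  qed
  then show "finite (S a k)" using assms(2) finite_subset by blast
qed

lemma asum_finite:
  assumes F: "finite F" and z: "\<And>i. i \<notin> F \<Longrightarrow> a i = 0"
  shows "asummable a" "asum a = sum a F"
proof -
  have sub: "S a k \<subseteq> F" for k
  proof
    fix x assume "x \<in> S a k" then show "x \<in> F" using z[of x] P_zero[of k] by (cases "x \<in> F") (auto simp: S_def)
  qed
  show sa: "asummable a" unfolding asummable_def using sub F finite_subset by blast
  show "asum a = sum a F" by (rule asum_eqI[OF sa], rule exI[of _ F]) (use F sub P_zero in auto)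
qed

lemma asum_single: "asum (\<lambda>i. if i = n then x else 0) = x"
  using asum_finite(2)[of "{n}" "\<lambda>i. if i = n then x else 0"] by simp

lemma asum_map:
  assumes a: "asummable a"
    and add: "\<And>x y. \<phi> (x + y) = \<phi> x + \<phi> y" and pres: "\<And>x k. x \<in> P k \<Longrightarrow> \<phi> x \<in> P k"
  shows "asummable (\<lambda>i. \<phi> (a i))" "asum (\<lambda>i. \<phi> (a i)) = \<phi> (asum a)"
proof -
  have z: "\<phi> 0 = 0" using add[of 0 0] by simp
  have n: "\<phi> (- x) = - \<phi> x" for x using add[of x "-x"] z minus_unique[of "\<phi> x" "\<phi> (-x)"] by simp
  have d: "\<phi> (x - y) = \<phi> x - \<phi> y" for x y using add[of x "-y"] n[of y] by simp
  have sm: "\<phi> (sum f A) = (\<Sum>i\<in>A. \<phi> (f i))" for f and A :: "'b set"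
    by (induction A rule: infinite_finite_induct) (auto simp: z add)
  have sub: "S (\<lambda>i. \<phi> (a i)) k \<subseteq> S a k" for k using pres by (auto simp: S_def)
  show sa: "asummable (\<lambda>i. \<phi> (a i))" using a sub unfolding asummable_def by (meson finite_subset)
  show "asum (\<lambda>i. \<phi> (a i)) = \<phi> (asum a)"
  proof (rule asum_eqI[OF sa])
    fix k
    have "\<phi> (asum a) - sum (\<lambda>i. \<phi> (a i)) (S a k) = \<phi> (asum a - sum a (S a k))" by (simp add: d sm)
    also have "\<dots> \<in> P k" using pres asum_prop[OF a] by blast
    finally show "\<exists>F. finite F \<and> S (\<lambda>i. \<phi> (a i)) k \<subseteq> F \<and> \<phi> (asum a) - sum (\<lambda>i. \<phi> (a i)) F \<in> P k"
      using sub a unfolding asummable_def by blast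
  qed
qed

lemma asum_add:
  assumes a: "asummable a" and b: "asummable b"
  shows "asummable (\<lambda>i. a i + b i)" "asum (\<lambda>i. a i + b i) = asum a + asum b"
proof -
  have sub: "S (\<lambda>i. a i + b i) k \<subseteq> S a k \<union> S b k" for k using P_add by (auto simp: S_def)
  show sa: "asummable (\<lambda>i. a i + b i)" using a b sub unfolding asummable_def by (meson finite_UnI finite_subset)
  show "asum (\<lambda>i. a i + b i) = asum a + asum b"
  proof (rule asum_eqI[OF sa])
    fix k
    let ?F = "S a k \<union> S b k"
    have fin: "finite ?F" using a b by (auto simp: asummable_def)
    have "(asum a - sum a ?F) + (asum b - sum b ?F) \<in> P k"
      using P_add asum_approx[OF a fin] asum_approx[OF b fin] by blast
    then have "asum a + asum b - sum (\<lambda>i. a i + b i) ?F \<in> P k" by (simp add: sum.distrib algebra_simps)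
    then show "\<exists>F. finite F \<and> S (\<lambda>i. a i + b i) k \<subseteq> F \<and> asum a + asum b - sum (\<lambda>i. a i + b i) F \<in> P k"
      using fin sub by blast
  qed
qed

lemma asum_neg:
  assumes a: "asummable a"
  shows "asummable (\<lambda>i. - a i)" "asum (\<lambda>i. - a i) = - asum a"
  using asum_map[OF a, of uminus] P_neg by auto

lemma asum_diff:
  assumes a: "asummable a" and b: "asummable b"
  shows "asummable (\<lambda>i. a i - b i)" "asum (\<lambda>i. a i - b i) = asum a - asum b"
  using asum_add[OF a asum_neg(1)[OF b]] asum_neg(2)[OF b] by auto

lemma asum_sum:
  assumes "finite A" and "\<And>x. x \<in> A \<Longrightarrow> asummable (a x)"
  shows "asummable (\<lambda>i. \<Sum>x\<in>A. a x i) \<and> asum (\<lambda>i. \<Sum>x\<in>A. a x i) = (\<Sum>x\<in>A. asum (a x))"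
  using assms
proof (induction A rule: finite_induct)
  case empty
  then show ?case using asum_finite[of "{}" "\<lambda>i. 0"] by simp
next
  case (insert y A)
  then have 1: "asummable (a y)" and 2: "asummable (\<lambda>i. \<Sum>x\<in>A. a x i)"
    and 3: "asum (\<lambda>i. \<Sum>x\<in>A. a x i) = (\<Sum>x\<in>A. asum (a x))" by auto
  show ?case using asum_add[OF 1 2] 3 insert.hyps by simp
qed

lemma asum_mult_left: "asummable a \<Longrightarrow> asummable (\<lambda>i. c * a i) \<and> asum (\<lambda>i. c * a i) = c * asum a"
  using asum_map[of a "\<lambda>x. c * x"] P_left by (auto simp: distrib_left)

lemma asum_mult_right: "asummable a \<Longrightarrow> asummable (\<lambda>i. a i * c) \<and> asum (\<lambda>i. a i * c) = asum a * c"
  using asum_map[of a "\<lambda>x. x * c"] P_right by (auto simp: distrib_right)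

lemma asum_reindex:
  assumes h: "inj h" and z: "\<And>i. i \<notin> range h \<Longrightarrow> a i = 0" and a: "asummable a"
  shows "asummable (\<lambda>j. a (h j))" "asum (\<lambda>j. a (h j)) = asum a"
proof -
  have SS: "S a k = h ` S (\<lambda>j. a (h j)) k" for k
  proof
    show "S a k \<subseteq> h ` S (\<lambda>j. a (h j)) k"
    proof
      fix i assume i: "i \<in> S a k"
      then have "a i \<noteq> 0" using P_zero by (auto simp: S_def)
      then obtain j where j: "i = h j" using z by blast
      then show "i \<in> h ` S (\<lambda>j. a (h j)) k" using i by (auto simp: S_def)
    qed
  qed (auto simp: S_def)
  have fin: "finite (S (\<lambda>j. a (h j)) k)" for k
    using a SS[of k] finite_imageD[of h] h unfolding asummable_def by (metis inj_on_subset subset_UNIV)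
  show sa: "asummable (\<lambda>j. a (h j))" using fin by (simp add: asummable_def)
  show "asum (\<lambda>j. a (h j)) = asum a"
  proof (rule asum_eqI[OF sa])
    fix k
    have "sum (\<lambda>j. a (h j)) (S (\<lambda>j. a (h j)) k) = sum a (S a k)"
      using SS[of k] h by (simp add: sum.reindex inj_on_subset)
    then have "asum a - sum (\<lambda>j. a (h j)) (S (\<lambda>j. a (h j)) k) \<in> P k"
      using asum_prop[OF a, of k] by simp
    then show "\<exists>F. finite F \<and> S (\<lambda>j. a (h j)) k \<subseteq> F \<and> asum a - sum (\<lambda>j. a (h j)) F \<in> P k"
      using fin by blast
  qed
qed

lemma asum_fubini:
  fixes a :: "'i \<times> 'j \<Rightarrow> 'a"
  assumes a: "asummable a"
  shows "\<And>i. asummable (\<lambda>j. a (i, j))" "asummable (\<lambda>i. asum (\<lambda>j. a (i, j)))"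
    "asum (\<lambda>i. asum (\<lambda>j. a (i, j))) = asum a"
proof -
  have fa: "finite (S a k)" for k using a by (simp add: asummable_def)
  have rowS: "S (\<lambda>j. a (i, j)) k \<subseteq> snd ` S a k" for i k by (force simp: S_def)
  show row: "asummable (\<lambda>j. a (i, j))" for i
    unfolding asummable_def using rowS fa by (meson finite_imageI finite_subset)
  let ?b = "\<lambda>i. asum (\<lambda>j. a (i, j))"
  have bS: "S ?b k \<subseteq> fst ` S a k" for k
  proof
    fix i assume i: "i \<in> S ?b k"
    show "i \<in> fst ` S a k"
    proof (rule ccontr)
      assume "i \<notin> fst ` S a k"
      then have "a (i, j) \<in> P k" for j by (force simp: S_def)
      then have "?b i \<in> P k" using asum_P[OF row] by blast
      then show False using i by (simp add: S_def)
    qed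
  qed
  show sb: "asummable ?b" unfolding asummable_def using bS fa by (meson finite_imageI finite_subset)
  show "asum ?b = asum a"
  proof (rule asum_eqI[OF sb])
    fix k
    let ?I = "fst ` S a k" and ?J = "snd ` S a k"
    have fI: "finite ?I" and fJ: "finite ?J" using fa by auto
    have "(\<Sum>i\<in>?I. ?b i - sum (\<lambda>j. a (i, j)) ?J) \<in> P k"
      by (rule P_sum[OF fI]) (rule asum_approx[OF row fJ rowS])
    then have 1: "sum ?b ?I - sum a (?I \<times> ?J) \<in> P k"
      by (simp add: sum_subtractf sum.cartesian_product)
    have sub: "S a k \<subseteq> ?I \<times> ?J" by (simp add: subset_iff mem_Times_iff imageI)
    have 2: "asum a - sum a (?I \<times> ?J) \<in> P k" using asum_approx[OF a _ sub] fI fJ by blast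
    have "asum a - sum ?b ?I \<in> P k" using P_diff[OF 2 1] by simp
    then show "\<exists>F. finite F \<and> S ?b k \<subseteq> F \<and> asum a - sum ?b F \<in> P k" using fI bS by blast
  qed
qed

lemma asum_swap:
  fixes T :: "'i \<Rightarrow> 'j \<Rightarrow> 'a"
  assumes a: "asummable (\<lambda>p. T (fst p) (snd p))"
  shows "asum (\<lambda>i. asum (\<lambda>j. T i j)) = asum (\<lambda>j. asum (\<lambda>i. T i j))"
proof -
  have 1: "asum (\<lambda>i. asum (\<lambda>j. T i j)) = asum (\<lambda>p. T (fst p) (snd p))"
    using asum_fubini(3)[OF a] by simp
  have r: "asummable (\<lambda>q. T (snd q) (fst q))" "asum (\<lambda>q. T (snd q) (fst q)) = asum (\<lambda>p. T (fst p) (snd p))"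
    using asum_reindex[OF _ _ a, of prod.swap] by (auto simp: inj_def)
  have 2: "asum (\<lambda>j. asum (\<lambda>i. T i j)) = asum (\<lambda>q. T (snd q) (fst q))"
    using asum_fubini(3)[OF r(1)] by simp
  show ?thesis using 1 2 r(2) by simp
qed

lemma asum_shift:
  fixes a :: "nat \<Rightarrow> 'a"
  assumes a: "asummable a"
  shows "asummable (\<lambda>n. a (Suc n))" "asum a = a 0 + asum (\<lambda>n. a (Suc n))"
proof -
  let ?a' = "\<lambda>n. if n = 0 then 0 else a n"
  have sa': "asummable ?a'" using a P_zero unfolding asummable_def S_def
    by (auto elim!: finite_subset[rotated])
  have r: "asummable (\<lambda>n. ?a' (Suc n))" "asum (\<lambda>n. ?a' (Suc n)) = asum ?a'"
  proof -
    have z: "\<And>i. i \<notin> range Suc \<Longrightarrow> ?a' i = 0" by (case_tac i) auto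
    show "asummable (\<lambda>n. ?a' (Suc n))" "asum (\<lambda>n. ?a' (Suc n)) = asum ?a'"
      using asum_reindex[OF inj_Suc z sa'] by auto
  qed
  then show "asummable (\<lambda>n. a (Suc n))" by simp
  have s1: "asummable (\<lambda>n. if n = 0 then a 0 else 0)" by (rule asum_finite[of "{0}"]) auto
  have "a = (\<lambda>n. (if n = 0 then a 0 else 0) + ?a' n)" by auto
  then have "asum a = asum (\<lambda>n. (if n = 0 then a 0 else 0) + ?a' n)" by simp
  also have "\<dots> = a 0 + asum ?a'" using asum_add(2)[OF s1 sa'] asum_single by simp
  finally show "asum a = a 0 + asum (\<lambda>n. a (Suc n))" using r by simp
qed

lemma tendsto_unique: "adic_tendsto M X s \<Longrightarrow> adic_tendsto M X t \<Longrightarrow> s = t"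
proof -
  assume s: "adic_tendsto M X s" and t: "adic_tendsto M X t"
  have "s - t \<in> P k" for k
  proof -
    obtain N1 where N1: "\<forall>n\<ge>N1. X n - s \<in> P k" using s unfolding adic_tendsto_def by blast
    obtain N2 where N2: "\<forall>n\<ge>N2. X n - t \<in> P k" using t unfolding adic_tendsto_def by blast
    have a1: "X (max N1 N2) - s \<in> P k" using N1 by simp
    have a2: "X (max N1 N2) - t \<in> P k" using N2 by simp
    have "(X (max N1 N2) - t) - (X (max N1 N2) - s) \<in> P k" using P_diff[OF a2 a1] .
    then show ?thesis by simp
  qed
  then show ?thesis using P_sep[of "s - t"] by simp
qed

lemma asum_lim:
  fixes a :: "nat \<Rightarrow> 'a"
  assumes a: "asummable a"
  shows "adic_lim M (\<lambda>N. sum a {..<N}) = asum a"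
proof -
  have "adic_tendsto M (\<lambda>N. sum a {..<N}) (asum a)"
    unfolding adic_tendsto_def
  proof
    fix k
    have fin: "finite (S a k)" using a by (simp add: asummable_def)
    obtain N where N: "S a k \<subseteq> {..<N}"
      using fin finite_nat_set_iff_bounded by (metis lessThan_iff subsetI)
    have "sum a {..<n} - asum a \<in> P k" if "n \<ge> N" for n
    proof -
      have "S a k \<subseteq> {..<n}" using N that by auto
      then have "asum a - sum a {..<n} \<in> P k" using asum_approx[OF a] by blast
      then have "- (asum a - sum a {..<n}) \<in> P k" by (rule P_neg)
      then show ?thesis by simp
    qed
    then show "\<exists>N. \<forall>n\<ge>N. sum a {..<n} - asum a \<in> P k" by blast
  qed
  then show ?thesis unfolding adic_lim_def using tendsto_unique by blast
qed

end


context skewctx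
begin

abbreviation mult :: "(nat \<Rightarrow> 'a) \<Rightarrow> (nat \<Rightarrow> 'a) \<Rightarrow> nat \<Rightarrow> 'a" where
  "mult f g \<equiv> skew_mult \<sigma> \<delta> (nonunits :: 'a set) f g"

definition trm :: "(nat \<Rightarrow> 'a) \<Rightarrow> (nat \<Rightarrow> 'a) \<Rightarrow> nat \<Rightarrow> nat \<Rightarrow> 'a" where
  "trm f g k i = (\<Sum>j\<le>k. f i * K i (k - j) (g j))"

lemma fin_nat1: "finite {i::nat. i - k < N}"
  by (rule finite_subset[of _ "{..<N + k}"]) auto

lemma fin_pair1: "finite {q::nat \<times> nat. max (fst q) (snd q) - k < N}"
  by (rule finite_subset[of _ "{..<N + k} \<times> {..<N + k}"]) (auto simp: mem_Times_iff)

lemma fin_pair2: "finite {q::nat \<times> nat. fst q + snd q - c < N}"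
  by (rule finite_subset[of _ "{..<N + c} \<times> {..<N + c}"]) (auto simp: mem_Times_iff)

lemma trm_P: "trm f g k i \<in> P (i - k)"
  unfolding trm_def
proof (rule P_sum)
  fix j assume j: "j \<in> {..k}"
  have "K i (k - j) (g j) \<in> P (0 + i - (k - j))" by (rule K_P) simp
  then have "K i (k - j) (g j) \<in> P (i - k)" by (rule P_monoD) (use j in auto)
  then show "f i * K i (k - j) (g j) \<in> P (i - k)" by (rule P_left)
qed simp

lemma trm_summable: "asummable (trm f g k)"
  by (rule asummable_weight[of _ "\<lambda>i. i - k"]) (auto intro: trm_P fin_nat1)

lemma mult_eq: "mult f g k = asum (trm f g k)"
proof -
  have "(\<lambda>N. \<Sum>j\<le>k. \<Sum>i<N. f i * K i (k - j) (g j)) = (\<lambda>N. sum (trm f g k) {..<N})"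
    unfolding trm_def by (rule ext) (rule sum.swap)
  then show ?thesis unfolding skew_mult_def using asum_lim[OF trm_summable] by simp
qed

definition inA :: "nat \<Rightarrow> (nat \<Rightarrow> 'a) \<Rightarrow> bool" where
  "inA w f \<longleftrightarrow> (\<forall>i. f i \<in> P (w - i))"

definition mnm :: "nat \<Rightarrow> 'a \<Rightarrow> nat \<Rightarrow> 'a" where
  "mnm n x = (\<lambda>k. if k = n then x else 0)"

definition ssum :: "(nat \<Rightarrow> nat \<Rightarrow> 'a) \<Rightarrow> nat \<Rightarrow> 'a" where
  "ssum p = (\<lambda>k. asum (\<lambda>n. p n k))"

lemma inA_0: "inA 0 f" by (simp add: inA_def)

lemma inA_mono: "inA w f \<Longrightarrow> v \<le> w \<Longrightarrow> inA v f"
  unfolding inA_def by (meson P_monoD diff_le_mono)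

lemma inA_mnm: "inA n (mnm n x)" by (simp add: inA_def mnm_def P_zero)

lemma inA_mult:
  assumes f: "inA a f" and g: "inA b g"
  shows "inA (a + b) (mult f g)"
  unfolding inA_def
proof
  fix k
  have "trm f g k i \<in> P (a + b - k)" for i
    unfolding trm_def
  proof (rule P_sum)
    fix j assume j: "j \<in> {..k}"
    have fi: "f i \<in> P (a - i)" using f by (simp add: inA_def)
    have "K i (k - j) (g j) \<in> P ((b - j) + i - (k - j))" by (rule K_P) (use g in \<open>simp add: inA_def\<close>)
    then have "f i * K i (k - j) (g j) \<in> P ((a - i) + ((b - j) + i - (k - j)))" by (rule P_mult[OF fi])
    then show "f i * K i (k - j) (g j) \<in> P (a + b - k)" by (rule P_monoD) (use j in auto)
  qed simp
  then show "mult f g k \<in> P (a + b - k)" unfolding mult_eq by (intro asum_P trm_summable)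
qed

lemma inA_summable: "(\<And>n. inA n (p n)) \<Longrightarrow> asummable (\<lambda>n. p n k)"
  by (rule asummable_weight[of _ "\<lambda>n. n - k"]) (auto simp: inA_def intro: fin_nat1)

lemma decomp: "ssum (\<lambda>n. mnm n (f n)) = f"
proof
  fix k
  have "(\<lambda>n. mnm n (f n) k) = (\<lambda>n. if n = k then f k else 0)" by (auto simp: mnm_def)
  then show "ssum (\<lambda>n. mnm n (f n)) k = f k" by (simp add: ssum_def asum_single)
qed

lemma left_cont:
  assumes p: "\<And>n. inA n (p n)"
  shows "mult (ssum p) g = ssum (\<lambda>n. mult (p n) g)"
proof
  fix k
  let ?T = "\<lambda>i n. trm (p n) g k i"
  have col: "asummable (\<lambda>n. p n i)" for i by (rule inA_summable[OF p])
  have 1: "trm (ssum p) g k i = asum (\<lambda>n. ?T i n)" for i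
  proof -
    have "trm (ssum p) g k i = (\<Sum>j\<le>k. asum (\<lambda>n. p n i * K i (k - j) (g j)))"
      unfolding trm_def ssum_def using asum_mult_right[OF col] by simp
    also have "\<dots> = asum (\<lambda>n. \<Sum>j\<le>k. p n i * K i (k - j) (g j))"
      using asum_sum[of "{..k}" "\<lambda>j n. p n i * K i (k - j) (g j)"] asum_mult_right[OF col] by simp
    finally show ?thesis by (simp add: trm_def)
  qed
  have bound: "?T (fst q) (snd q) \<in> P (max (snd q) (fst q) - k)" for q
    unfolding trm_def
  proof (rule P_sum)
    fix j assume j: "j \<in> {..k}"
    let ?i = "fst q" and ?n = "snd q"
    have a1: "p ?n ?i \<in> P (?n - ?i)" using p by (simp add: inA_def)
    have "K ?i (k - j) (g j) \<in> P (0 + ?i - (k - j))" by (rule K_P) simp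
    then have "p ?n ?i * K ?i (k - j) (g j) \<in> P ((?n - ?i) + (0 + ?i - (k - j)))" by (rule P_mult[OF a1])
    then show "p ?n ?i * K ?i (k - j) (g j) \<in> P (max ?n ?i - k)" by (rule P_monoD) (use j in auto)
  qed simp
  have sT: "asummable (\<lambda>q. ?T (fst q) (snd q))"
    by (rule asummable_weight[OF bound]) (use fin_pair1[of k] in \<open>simp add: max.commute\<close>)
  have "mult (ssum p) g k = asum (\<lambda>i. asum (\<lambda>n. ?T i n))" unfolding mult_eq by (rule arg_cong[where f=asum]) (rule ext, rule 1)
  also have "\<dots> = asum (\<lambda>n. asum (\<lambda>i. ?T i n))" by (rule asum_swap[OF sT])
  also have "\<dots> = ssum (\<lambda>n. mult (p n) g) k" unfolding ssum_def mult_eq by simp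
  finally show "mult (ssum p) g k = ssum (\<lambda>n. mult (p n) g) k" .
qed

lemma right_cont:
  assumes p: "\<And>n. inA n (p n)"
  shows "mult f (ssum p) = ssum (\<lambda>n. mult f (p n))"
proof
  fix k
  let ?T = "\<lambda>i n. trm f (p n) k i"
  have col: "asummable (\<lambda>n. p n j)" for j by (rule inA_summable[OF p])
  have mp: "asummable (\<lambda>n. f i * K i l (p n j)) \<and> asum (\<lambda>n. f i * K i l (p n j)) = f i * K i l (asum (\<lambda>n. p n j))"
    for i l j
    using asum_map[OF col, of "\<lambda>x. f i * K i l x"] K_add K_P' P_left by (auto simp: distrib_left)
  have 1: "trm f (ssum p) k i = asum (\<lambda>n. ?T i n)" for i
  proof -
    have "trm f (ssum p) k i = (\<Sum>j\<le>k. asum (\<lambda>n. f i * K i (k - j) (p n j)))"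
      unfolding trm_def ssum_def using mp by simp
    also have "\<dots> = asum (\<lambda>n. \<Sum>j\<le>k. f i * K i (k - j) (p n j))"
      using asum_sum[of "{..k}" "\<lambda>j n. f i * K i (k - j) (p n j)"] mp by simp
    finally show ?thesis by (simp add: trm_def)
  qed
  have bound: "?T (fst q) (snd q) \<in> P (fst q + snd q - 2 * k)" for q
    unfolding trm_def
  proof (rule P_sum)
    fix j assume j: "j \<in> {..k}"
    let ?i = "fst q" and ?n = "snd q"
    have "K ?i (k - j) (p ?n j) \<in> P ((?n - j) + ?i - (k - j))" by (rule K_P) (use p in \<open>simp add: inA_def\<close>)
    then have "f ?i * K ?i (k - j) (p ?n j) \<in> P ((?n - j) + ?i - (k - j))" by (rule P_left)
    then show "f ?i * K ?i (k - j) (p ?n j) \<in> P (?i + ?n - 2 * k)" by (rule P_monoD) (use j in auto)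
  qed simp
  have sT: "asummable (\<lambda>q. ?T (fst q) (snd q))"
    by (rule asummable_weight[OF bound]) (use fin_pair2 in simp)
  have "mult f (ssum p) k = asum (\<lambda>i. asum (\<lambda>n. ?T i n))" unfolding mult_eq by (rule arg_cong[where f=asum]) (rule ext, rule 1)
  also have "\<dots> = asum (\<lambda>n. asum (\<lambda>i. ?T i n))" by (rule asum_swap[OF sT])
  also have "\<dots> = ssum (\<lambda>n. mult f (p n)) k" unfolding ssum_def mult_eq by simp
  finally show "mult f (ssum p) k = ssum (\<lambda>n. mult f (p n)) k" .
qed

end


context skewctx
begin

lemma mult_mnm_left: "mult (mnm i a) g k = (\<Sum>j\<le>k. a * K i (k - j) (g j))"
proof -
  have "trm (mnm i a) g k = (\<lambda>i'. if i' = i then (\<Sum>j\<le>k. a * K i (k - j) (g j)) else 0)"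
    by (auto simp: trm_def mnm_def)
  then show ?thesis by (simp add: mult_eq asum_single)
qed

lemma mult_mnm_right: "mult f (mnm l c) k = (if l \<le> k then asum (\<lambda>i. f i * K i (k - l) c) else 0)"
proof -
  have "trm f (mnm l c) k i = (if l \<le> k then f i * K i (k - l) c else 0)" for i
  proof -
    have "trm f (mnm l c) k i = (\<Sum>j\<le>k. if j = l then f i * K i (k - l) c else 0)"
      unfolding trm_def mnm_def by (rule sum.cong) (auto simp: K_zero)
    then show ?thesis by (simp add: sum.delta)
  qed
  then have "trm f (mnm l c) k = (\<lambda>i. if l \<le> k then f i * K i (k - l) c else 0)" by auto
  then show ?thesis using asum_finite(2)[of "{}" "\<lambda>i::nat. 0"] by (simp add: mult_eq)
qed

lemma one_mnm: "skew_one = mnm 0 1"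
  by (auto simp: skew_one_def mnm_def)

lemma mult_one_left: "mult skew_one g = g"
proof
  fix k
  have "mult skew_one g k = (\<Sum>j\<le>k. if j = k then g j else 0)"
    unfolding one_mnm mult_mnm_left by (rule sum.cong) auto
  then show "mult skew_one g k = g k" by (simp add: sum.delta)
qed

lemma mult_one_right: "mult f skew_one = f"
proof
  fix k
  have "(\<lambda>i. f i * K i k 1) = (\<lambda>i. if i = k then f k else 0)" by (auto simp: K_one)
  then show "mult f skew_one k = f k" unfolding one_mnm mult_mnm_right by (simp add: asum_single)
qed

lemma mult_mnm_mnm: "mult (mnm i a) (mnm j b) = (\<lambda>k. if j \<le> k then a * K i (k - j) b else 0)"
proof
  fix k
  have "mult (mnm i a) (mnm j b) k = (\<Sum>j'\<le>k. if j' = j then a * K i (k - j) b else 0)"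
    unfolding mult_mnm_left by (rule sum.cong) (auto simp: mnm_def K_zero)
  then show "mult (mnm i a) (mnm j b) k = (if j \<le> k then a * K i (k - j) b else 0)" by (simp add: sum.delta)
qed

lemma sum_shift_lower:
  fixes g :: "nat \<Rightarrow> 'a"
  assumes z: "\<And>x. x < l \<Longrightarrow> g x = 0"
  shows "(\<Sum>x\<le>l + s. g x) = (\<Sum>u\<le>s. g (u + l))"
proof -
  have "(\<Sum>u\<le>s. g (u + l)) = sum g ((\<lambda>u. u + l) ` {..s})" by (simp add: sum.reindex inj_on_def)
  also have "\<dots> = sum g {..l + s}"
  proof (rule sum.mono_neutral_left)
    show "\<forall>i\<in>{..l + s} - (\<lambda>u. u + l) ` {..s}. g i = 0"
    proof
      fix x assume x: "x \<in> {..l + s} - (\<lambda>u. u + l) ` {..s}"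
      have "\<not> l \<le> x"
      proof
        assume "l \<le> x"
        then have "x = (x - l) + l" "x - l \<in> {..s}" using x by auto
        then show False using x by blast
      qed
      then show "g x = 0" using z by simp
    qed
  qed auto
  finally show ?thesis by simp
qed

lemma assoc3: "mult (mult (mnm i a) (mnm j b)) (mnm l c) = mult (mnm i a) (mult (mnm j b) (mnm l c))"
proof
  fix k
  show "mult (mult (mnm i a) (mnm j b)) (mnm l c) k = mult (mnm i a) (mult (mnm j b) (mnm l c)) k"
  proof (cases "l \<le> k")
    case False
    have "mult (mnm i a) (mult (mnm j b) (mnm l c)) k = (\<Sum>k'\<le>k. a * K i (k - k') 0)"
      unfolding mult_mnm_left mult_mnm_mnm by (rule sum.cong) (use False in auto)
    then show ?thesis using False by (simp add: mult_mnm_right K_zero)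
  next
    case True
    define s where "s = k - l"
    have ks: "k = l + s" using True s_def by simp
    let ?q = "\<lambda>i'. (if j \<le> i' then a * K i (i' - j) b else 0) * K i' (k - l) c"
    have qz: "?q i' = 0" if "i' \<notin> (\<lambda>t. t + j) ` {..i}" for i'
    proof (cases "j \<le> i'")
      case True
      then have "i' = (i' - j) + j" by simp
      then have "\<not> i' - j \<le> i" using that by (metis atMost_iff imageI)
      then show ?thesis using True by (simp add: K_gt)
    qed simp
    have "asum ?q = sum ?q ((\<lambda>t. t + j) ` {..i})" by (rule asum_finite(2)) (use qz in auto)
    also have "\<dots> = (\<Sum>t\<le>i. ?q (t + j))" by (simp add: sum.reindex inj_on_def)
    also have "\<dots> = (\<Sum>t\<le>i. a * K i t b * K (t + j) s c)" by (simp add: s_def)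
    also have "\<dots> = (\<Sum>t\<le>i. \<Sum>u\<le>s. a * K i t b * K t (s - u) (K j u c))"
      by (simp add: K_comp sum_distrib_left)
    finally have L: "mult (mult (mnm i a) (mnm j b)) (mnm l c) k = (\<Sum>t\<le>i. \<Sum>u\<le>s. a * K i t b * K t (s - u) (K j u c))"
      using True by (simp add: mult_mnm_right mult_mnm_mnm)
    let ?g = "\<lambda>k'. a * K i (k - k') (if l \<le> k' then b * K j (k' - l) c else 0)"
    have "mult (mnm i a) (mult (mnm j b) (mnm l c)) k = (\<Sum>k'\<le>l + s. ?g k')"
      unfolding mult_mnm_left mult_mnm_mnm ks ..
    also have "\<dots> = (\<Sum>u\<le>s. ?g (u + l))" by (rule sum_shift_lower) (auto simp: K_zero)
    also have "\<dots> = (\<Sum>u\<le>s. a * K i (s - u) (b * K j u c))" by (rule sum.cong) (auto simp: ks)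
    also have "\<dots> = (\<Sum>u\<le>s. \<Sum>t\<le>i. a * K i t b * K t (s - u) (K j u c))"
      by (simp add: K_mult sum_distrib_left mult.assoc)
    also have "\<dots> = (\<Sum>t\<le>i. \<Sum>u\<le>s. a * K i t b * K t (s - u) (K j u c))" by (rule sum.swap)
    finally show ?thesis using L by simp
  qed
qed

lemma inA_mult_mnm_l: "inA m (mult g (mnm m x))"
proof -
  have "inA (0 + m) (mult g (mnm m x))" by (rule inA_mult[OF inA_0 inA_mnm])
  then show ?thesis by simp
qed

lemma inA_mult_mnm_r: "inA m (mult (mnm m x) g)"
proof -
  have "inA (m + 0) (mult (mnm m x) g)" by (rule inA_mult[OF inA_mnm inA_0])
  then show ?thesis by simp
qed

lemma assoc2: "mult (mult (mnm i a) (mnm j b)) h = mult (mnm i a) (mult (mnm j b) h)"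
proof -
  let ?p = "\<lambda>l. mnm l (h l)"
  have "mult (mult (mnm i a) (mnm j b)) h = mult (mult (mnm i a) (mnm j b)) (ssum ?p)" by (simp add: decomp)
  also have "\<dots> = ssum (\<lambda>l. mult (mult (mnm i a) (mnm j b)) (?p l))" by (rule right_cont) (rule inA_mnm)
  also have "\<dots> = ssum (\<lambda>l. mult (mnm i a) (mult (mnm j b) (?p l)))" by (simp add: assoc3)
  also have "\<dots> = mult (mnm i a) (ssum (\<lambda>l. mult (mnm j b) (?p l)))"
    by (rule right_cont[symmetric]) (rule inA_mult_mnm_l)
  also have "\<dots> = mult (mnm i a) (mult (mnm j b) (ssum ?p))"
    by (subst right_cont[of ?p]) (auto intro: inA_mnm)
  finally show ?thesis by (simp add: decomp)
qed

lemma assoc1: "mult (mult (mnm i a) g) h = mult (mnm i a) (mult g h)"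
proof -
  let ?p = "\<lambda>m. mnm m (g m)"
  have "mult (mult (mnm i a) g) h = mult (mult (mnm i a) (ssum ?p)) h" by (simp add: decomp)
  also have "\<dots> = mult (ssum (\<lambda>m. mult (mnm i a) (?p m))) h"
    by (subst right_cont[of ?p]) (auto intro: inA_mnm)
  also have "\<dots> = ssum (\<lambda>m. mult (mult (mnm i a) (?p m)) h)"
    by (rule left_cont) (rule inA_mult_mnm_l)
  also have "\<dots> = ssum (\<lambda>m. mult (mnm i a) (mult (?p m) h))" by (simp add: assoc2)
  also have "\<dots> = mult (mnm i a) (ssum (\<lambda>m. mult (?p m) h))"
    by (rule right_cont[symmetric]) (rule inA_mult_mnm_r)
  also have "\<dots> = mult (mnm i a) (mult (ssum ?p) h)"
    by (subst left_cont[of ?p]) (auto intro: inA_mnm)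
  finally show ?thesis by (simp add: decomp)
qed

lemma assoc: "mult (mult f g) h = mult f (mult g h)"
proof -
  let ?p = "\<lambda>n. mnm n (f n)"
  have "mult (mult f g) h = mult (mult (ssum ?p) g) h" by (simp add: decomp)
  also have "\<dots> = mult (ssum (\<lambda>n. mult (?p n) g)) h"
    by (subst left_cont[of ?p]) (auto intro: inA_mnm)
  also have "\<dots> = ssum (\<lambda>n. mult (mult (?p n) g) h)"
    by (rule left_cont) (rule inA_mult_mnm_r)
  also have "\<dots> = ssum (\<lambda>n. mult (?p n) (mult g h))" by (simp add: assoc1)
  also have "\<dots> = mult (ssum ?p) (mult g h)"
    by (rule left_cont[symmetric]) (rule inA_mnm)
  finally show ?thesis by (simp add: decomp)
qed

lemma mult_diff_left: "mult (\<lambda>k. a k - b k) g = (\<lambda>k. mult a g k - mult b g k)"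
proof
  fix k
  have "trm (\<lambda>k. a k - b k) g k = (\<lambda>i. trm a g k i - trm b g k i)"
    by (auto simp: trm_def left_diff_distrib sum_subtractf)
  then show "mult (\<lambda>k. a k - b k) g k = mult a g k - mult b g k"
    by (simp add: mult_eq asum_diff trm_summable)
qed

lemma mult_diff_right: "mult f (\<lambda>k. a k - b k) = (\<lambda>k. mult f a k - mult f b k)"
proof
  fix k
  have "trm f (\<lambda>k. a k - b k) k = (\<lambda>i. trm f a k i - trm f b k i)"
    by (auto simp: trm_def K_diff right_diff_distrib sum_subtractf)
  then show "mult f (\<lambda>k. a k - b k) k = mult f a k - mult f b k"
    by (simp add: mult_eq asum_diff trm_summable)
qed

end


context skewctx
begin

lemma coeff0: "mult f g 0 - f 0 * g 0 \<in> M"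
proof -
  have sa: "asummable (trm f g 0)" by (rule trm_summable)
  have "trm f g 0 0 = f 0 * g 0" by (simp add: trm_def)
  then have e: "mult f g 0 = f 0 * g 0 + asum (\<lambda>n. trm f g 0 (Suc n))"
    using asum_shift(2)[OF sa] by (simp add: mult_eq)
  have "asum (\<lambda>n. trm f g 0 (Suc n)) \<in> P 1"
  proof (rule asum_P[OF asum_shift(1)[OF sa]])
    fix n show "trm f g 0 (Suc n) \<in> P 1" using trm_P[of f g 0 "Suc n"] P_monoD[of _ "Suc n" 1] by simp
  qed
  then show ?thesis using e P_one by simp
qed

lemma mult_const_left: "mult (mnm 0 u) g = (\<lambda>k. u * g k)"
proof
  fix k
  have "mult (mnm 0 u) g k = (\<Sum>j\<le>k. if j = k then u * g j else 0)"
    unfolding mult_mnm_left by (rule sum.cong) auto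
  then show "mult (mnm 0 u) g k = u * g k" by (simp add: sum.delta)
qed

primrec pw :: "(nat \<Rightarrow> 'a) \<Rightarrow> nat \<Rightarrow> nat \<Rightarrow> 'a" where
  "pw h 0 = skew_one"
| "pw h (Suc n) = mult h (pw h n)"

lemma inA_pw: "inA 1 h \<Longrightarrow> inA n (pw h n)"
proof (induction n)
  case 0 then show ?case by (simp add: inA_0)
next
  case (Suc n) then show ?case using inA_mult[of 1 h n "pw h n"] by simp
qed

lemma pw_comm: "mult (pw h n) h = pw h (Suc n)"
proof (induction n)
  case 0 then show ?case by (simp add: mult_one_left mult_one_right)
next
  case (Suc n)
  have "mult (pw h (Suc n)) h = mult h (mult (pw h n) h)" by (simp add: assoc)
  then show ?case using Suc by simp
qed

lemma geo_inverse:
  assumes h: "inA 1 h"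
  shows "mult (\<lambda>k. skew_one k - h k) (ssum (pw h)) = skew_one"
    "mult (ssum (pw h)) (\<lambda>k. skew_one k - h k) = skew_one"
proof -
  have p: "\<And>n. inA n (pw h n)" using inA_pw[OF h] .
  have geo: "ssum (pw h) k = skew_one k + ssum (\<lambda>n. pw h (Suc n)) k" for k
    unfolding ssum_def using asum_shift(2)[OF inA_summable[OF p]] by simp
  have 1: "mult h (ssum (pw h)) = ssum (\<lambda>n. pw h (Suc n))"
    using right_cont[OF p, of h] by simp
  have 2: "mult (ssum (pw h)) h = ssum (\<lambda>n. pw h (Suc n))"
    using left_cont[OF p, of h] by (simp add: pw_comm)
  show "mult (\<lambda>k. skew_one k - h k) (ssum (pw h)) = skew_one"
    unfolding mult_diff_left mult_one_left 1 using geo by (auto simp: fun_eq_iff)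
  show "mult (ssum (pw h)) (\<lambda>k. skew_one k - h k) = skew_one"
    unfolding mult_diff_right mult_one_right 2 using geo by (auto simp: fun_eq_iff)
qed

lemma unit_iff: "unit_wrt mult skew_one f \<longleftrightarrow> unit_wrt (*) 1 (f 0)"
proof
  assume "unit_wrt mult skew_one f"
  then obtain g where g: "mult f g = skew_one" unfolding unit_wrt_def by blast
  then have g0: "mult f g 0 = 1" by (simp add: skew_one_def)
  have "f 0 \<notin> M"
  proof
    assume "f 0 \<in> M"
    then have "f 0 * g 0 \<in> M" by (rule M_right)
    moreover have "1 - f 0 * g 0 \<in> M" using coeff0[of f g] g0 by simp
    ultimately have "(1 - f 0 * g 0) + f 0 * g 0 \<in> M" by (rule M_add[rotated])
    then show False using one_notin_M by simp
  qed
  then show "unit_wrt (*) 1 (f 0)" using notM_unit by simp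
next
  assume "unit_wrt (*) 1 (f 0)"
  then obtain u where u: "f 0 * u = 1" "u * f 0 = 1" unfolding unit_wrt_def by blast
  define c where "c = mnm 0 u"
  define c' where "c' = mnm 0 (f 0)"
  define e where "e = mult c f"
  have e_eq: "e = (\<lambda>k. u * f k)" unfolding e_def c_def by (rule mult_const_left)
  define h where "h = (\<lambda>k. skew_one k - e k)"
  have hA: "inA 1 h"
    unfolding inA_def
  proof
    fix i show "h i \<in> P (1 - i)"
      by (cases i) (auto simp: h_def e_eq skew_one_def u ideal_prod.zero)
  qed
  have e_h: "e = (\<lambda>k. skew_one k - h k)" by (simp add: h_def)
  define G where "G = ssum (pw h)"
  have eG: "mult e G = skew_one" and Ge: "mult G e = skew_one"
    using geo_inverse[OF hA] unfolding e_h G_def by auto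
  have f_eq: "f = mult c' e"
    unfolding c'_def e_eq mult_const_left by (simp add: mult.assoc[symmetric] u)
  have c'c: "mult c' c = skew_one"
    unfolding c'_def mult_const_left by (auto simp: c_def mnm_def skew_one_def u)
  define y where "y = mult G c"
  have "mult f y = skew_one"
  proof -
    have "mult f y = mult c' (mult (mult e G) c)" unfolding f_eq y_def by (simp add: assoc)
    also have "\<dots> = skew_one" using eG c'c by (simp add: mult_one_left)
    finally show ?thesis .
  qed
  moreover have "mult y f = skew_one"
    unfolding y_def by (simp add: assoc e_def[symmetric] Ge)
  ultimately show "unit_wrt mult skew_one f" unfolding unit_wrt_def by blast
qed

lemma main: "(\<forall>f :: nat \<Rightarrow> 'a. unit_wrt mult skew_one f \<longleftrightarrow> unit_wrt (*) 1 (f 0))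
         \<and> local_ring_wrt skew_add skew_neg (\<lambda>_. 0) mult skew_one"
proof (intro conjI allI unit_iff)
  have NU: "{x. \<not> unit_wrt mult skew_one x} = {x. x 0 \<in> M}"
    using unit_iff notM_unit by blast
  show "local_ring_wrt skew_add skew_neg (\<lambda>_. 0) mult skew_one"
    unfolding local_ring_wrt_def two_sided_ideal_wrt_def NU
  proof (intro conjI ballI allI)
    show "(\<lambda>_. 0) \<in> {x. x 0 \<in> M}" using M_zero by simp
    show "skew_add x y \<in> {x. x 0 \<in> M}" if "x \<in> {x. x 0 \<in> M}" "y \<in> {x. x 0 \<in> M}" for x y
      using that M_add by (simp add: skew_add_def)
    show "skew_neg x \<in> {x. x 0 \<in> M}" if "x \<in> {x. x 0 \<in> M}" for x
      using that M_neg by (simp add: skew_neg_def)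
    show "mult r x \<in> {x. x 0 \<in> M}" if "x \<in> {x. x 0 \<in> M}" for x r
    proof -
      have "r 0 * x 0 \<in> M" using that M_left by simp
      then have "(mult r x 0 - r 0 * x 0) + r 0 * x 0 \<in> M" using coeff0 M_add by blast
      then show ?thesis by simp
    qed
    show "mult x r \<in> {x. x 0 \<in> M}" if "x \<in> {x. x 0 \<in> M}" for x r
    proof -
      have "x 0 * r 0 \<in> M" using that M_right by simp
      then have "(mult x r 0 - x 0 * r 0) + x 0 * r 0 \<in> M" using coeff0 M_add by blast
      then show ?thesis by simp
    qed
    show "{x. x 0 \<in> M} \<noteq> UNIV" using one_notin_M by (auto simp: skew_one_def)
  qed
qed

end

theorem mainTheorem7:
  fixes \<sigma> \<delta> :: "'a::ring_1 \<Rightarrow> 'a"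
  assumes local: "local_ring_wrt (+) uminus 0 (*) (1::'a)"
    and complete: "adic_complete (nonunits :: 'a set)"
    and separated: "adic_separated (nonunits :: 'a set)"
    and endo: "ring_endo \<sigma>"
    and sigma_m: "\<sigma> ` nonunits \<subseteq> nonunits"
    and deriv: "sigma_derivation \<sigma> \<delta>"
    and delta_R: "range \<delta> \<subseteq> nonunits"
    and delta_m: "\<delta> ` nonunits \<subseteq> ideal_pow nonunits 2"
  shows "(\<forall>f :: nat \<Rightarrow> 'a. unit_wrt (skew_mult \<sigma> \<delta> nonunits) skew_one f \<longleftrightarrow> unit_wrt (*) 1 (f 0))
         \<and> local_ring_wrt skew_add skew_neg (\<lambda>_. 0) (skew_mult \<sigma> \<delta> nonunits) skew_one"
proof -
  interpret skewctx \<sigma> \<delta> by (unfold_locales; fact assms)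
  show ?thesis by (rule main)
qed


end
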